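(* Let $\lambda,s\in\mathbb{C}$ be parameters and consider sequences $(x_n,y_n)$ satisfying the recurrence $$x_n x_{n+1}=\frac{n-y_n}{2y_n^2+2\lambda y_n},\qquad y_n+y_{n-1}=-\frac{2\lambda x_n^2-s x_n-1}{2x_n^2}.$$ This recurrence is equivalent to the discrete Painlevé equation $$\overline{q}+q=p-t-\frac{a_2}{p},\qquad p+\underline{p}=q+t+\frac{a_1}{q},$$ with root variables $a_0,a_1,a_2$ satisfying $a_0+a_1+a_2=1$ and evolving under the step $n\mapsto n+1$ as $\overline{a}_0=a_0$, $\overline{a}_1=a_1-1$, $\overline{a}_2=a_2+1$. The equivalence is given by the change of variables $$x(q,p)=\frac{q}{\sqrt{2}\,(a_1-qp)},\qquad y(q,p)=qp-a_1,\qquad s(t)=\sqrt{2}\,t,$$ with inverse $$q(x,y)=-\sqrt{2}\,xy,\qquad p(x,y)=\frac{n-y}{\sqrt{2}\,xy},\qquad t(s)=\frac{s}{\sqrt{2}},$$ and the parameters are related by $$a_0=1-\lambda,\qquad a_1=-n,\qquad a_2=n+\lambda.$$ That is, setting $q_n=-\sqrt2 x_ny_n$, $p_n=\frac{n-y_n}{\sqrt2 x_ny_n}$, $t=s/\sqrt2$, the pair $(x_n,y_n)$ satisfies the recurrence above if and only if $q_{n+1}+q_n=p_n-t-\frac{n+\lambda}{p_n}$ and $p_n+p_{n-1}=q_n+t-\frac{n}{q_n}$ (whenever all expressions are defined).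
   Context: Here $\overline{q},\underline{p}$ denote the values of $q$ at step $n+1$ and of $p$ at step $n-1$ respectively, while $q,p,a_1,a_2$ are taken at step $n$. Origin of the recurrence: for the weight $w(x)=x^\lambda e^{-x^2+sx}$ on $(0,\infty)$ ($\lambda>-1$, $s\in\mathbb{R}$), with ladder-operator quantities $R_n(s)$, $r_n(s)$, one sets $x_n=1/R_{n-1}(s)$ and $y_n=-r_n(s)$; the theorem itself concerns only the displayed recurrence. The target system is the standard discrete Painlevé equation of type d-$\mathrm{P}(A_2^{(1)}/E_6^{(1)})$ in the normalization of Kajiwara–Noumi–Yamada. *)

theory Defs
  imports Complex_Main
begin

definition q_of :: "complex \<Rightarrow> complex \<Rightarrow> complex" where
  "q_of x y = - complex_of_real (sqrt 2) * x * y"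

definition p_of :: "int \<Rightarrow> complex \<Rightarrow> complex \<Rightarrow> complex" where
  "p_of n x y = (of_int n - y) / (complex_of_real (sqrt 2) * x * y)"

definition t_of :: "complex \<Rightarrow> complex" where
  "t_of s = s / complex_of_real (sqrt 2)"

end

theory Submission
  imports Defs
begin

lemma eq_iff_lin: fixes a b c d e :: complex
  assumes "a - b = c*(d-e)" "c \<noteq> 0" shows "(a = b) \<longleftrightarrow> (d = e)"
  using assms by auto

lemma gh: fixes a s v w u :: complex
  assumes "a = - v + s + w" shows "(a = s + u - v) \<longleftrightarrow> (u = w)"
  using assms by (auto simp: algebra_simps)

lemma key:
  fixes r m l s X Y X1 Y1 :: complex
  assumes r2: "r*r = 2" and nz: "X\<noteq>0" "Y\<noteq>0" "X1\<noteq>0" "Y1\<noteq>0" "m - Y \<noteq> 0" "Y + l \<noteq> 0"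
  shows "(X * X1 = (m - Y) / (2 * Y^2 + 2 * l * Y) \<and> Y1 + Y = - (2 * l * X1^2 - s * X1 - 1) / (2 * X1^2))
     \<longleftrightarrow> (- r*X1*Y1 + - r*X*Y = (m-Y)/(r*X*Y) - s/r - (m+l)/((m-Y)/(r*X*Y))
         \<and> (m+1-Y1)/(r*X1*Y1) + (m-Y)/(r*X*Y) = - r*X1*Y1 + s/r - (m+1)/(- r*X1*Y1))"
proof -
  have r: "r \<noteq> 0" using r2 by auto
  have yl: "2 * Y^2 + 2 * l * Y \<noteq> 0"
  proof -
    have "2 * Y^2 + 2 * l * Y = 2*Y*(Y+l)" by (simp add: algebra_simps power2_eq_square)
    thus ?thesis using nz by simp
  qed
  define w where "w = 2*X*Y*(Y+l)/(m-Y)"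
  have w: "w \<noteq> 0" using nz by (simp add: w_def)
  have wm: "w*(m-Y) = 2*X*Y*(Y+l)" using nz by (simp add: w_def)
  have F1: "(- r*X1*Y1 + - r*X*Y = (m-Y)/(r*X*Y) - s/r - (m+l)/((m-Y)/(r*X*Y)))
     \<longleftrightarrow> (2*X1*Y1 = - ((m-Y)/(X*Y)) + s + w)"
    apply (rule eq_iff_lin[where c = "-1/r"])
    using nz r r2 apply (simp add: w_def field_simps) apply algebra
    using r by simp
  have F2: "((m+1-Y1)/(r*X1*Y1) + (m-Y)/(r*X*Y) = - r*X1*Y1 + s/r - (m+1)/(- r*X1*Y1))
     \<longleftrightarrow> (2*X1*Y1 = s + 1/X1 - (m-Y)/(X*Y))"
    apply (rule eq_iff_lin[where c = "1/r"])
    using nz r r2 apply (simp add: field_simps) apply algebra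
    using r by simp
  have E1: "(X * X1 = (m - Y) / (2 * Y^2 + 2 * l * Y)) \<longleftrightarrow> (1/X1 = w)"
    using nz yl w unfolding w_def by (auto simp add: field_simps power2_eq_square)
  have E2: "(Y1 + Y = - (2 * l * X1^2 - s * X1 - 1) / (2 * X1^2))
     \<longleftrightarrow> (2*X1*Y1 = - ((m-Y)/(X*Y)) + s + w)" if "1/X1 = w"
  proof -
    have X1: "X1 = 1/w" using that nz w by (simp add: field_simps)
    show ?thesis
    apply (rule eq_iff_lin[where c = "1/(2*X1)"])
    using nz w wm unfolding X1 apply (simp add: field_simps power2_eq_square)
    using nz w by simp
  qed
  have GH: "(2*X1*Y1 = s + 1/X1 - (m-Y)/(X*Y)) \<longleftrightarrow> (1/X1 = w)"
    if "2*X1*Y1 = - ((m-Y)/(X*Y)) + s + w" for dummy :: bool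
    using gh[OF that] .
  show ?thesis unfolding F1 F2 E1
    apply (rule iffI)
     apply (erule conjE)
     apply (frule E2[THEN iffD1], assumption)
     apply (rule conjI, assumption)
     apply (erule GH[THEN iffD2], assumption)
    apply (erule conjE)
    apply (frule GH[THEN iffD1], assumption)
    apply (rule conjI, assumption)
    apply (erule E2[THEN iffD2], assumption)
    done
qed

lemma reidx: "(\<forall>n::int. P n \<and> Q n) \<longleftrightarrow> (\<forall>n. P n \<and> Q (n+1))"
proof
  assume "\<forall>n. P n \<and> Q (n+1)"
  then have "P n \<and> Q ((n-1)+1)" for n by blast
  then show "\<forall>n. P n \<and> Q n" by simp
qed simp

lemma reidx2:
  assumes "\<And>n. (P n \<and> Q (n+1)) \<longleftrightarrow> (R n \<and> S (n+1))"
  shows "(\<forall>n::int. P n \<and> Q n) \<longleftrightarrow> (\<forall>n. R n \<and> S n)"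
  unfolding reidx[of P Q] reidx[of R S] using assms by (simp only:)

lemma pointwise:
  fixes lam s :: complex and x y :: "int \<Rightarrow> complex" and n :: int
  assumes "\<forall>n. x n \<noteq> 0" and "\<forall>n. y n \<noteq> 0" and "\<forall>n. y n + lam \<noteq> 0"
    and "\<forall>n. y n \<noteq> of_int n"
  shows "(x n * x (n + 1) = (of_int n - y n) / (2 * (y n)^2 + 2 * lam * y n)
              \<and> y (n+1) + y (n + 1 - 1) = - (2 * lam * (x (n+1))^2 - s * x (n+1) - 1) / (2 * (x (n+1))^2))
     \<longleftrightarrow>
         (q_of (x (n + 1)) (y (n + 1)) + q_of (x n) (y n)
                 = p_of n (x n) (y n) - t_of s - (of_int n + lam) / p_of n (x n) (y n)
              \<and> p_of (n+1) (x (n+1)) (y (n+1)) + p_of (n + 1 - 1) (x (n + 1 - 1)) (y (n + 1 - 1))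
                 = q_of (x (n+1)) (y (n+1)) + t_of s - of_int (n+1) / q_of (x (n+1)) (y (n+1)))"
proof -
  have r2: "complex_of_real (sqrt 2) * complex_of_real (sqrt 2) = 2"
    by (simp flip: of_real_mult)
  have yn: "y n \<noteq> of_int n" using assms(4) by blast
  have m: "of_int n - y n \<noteq> 0" using yn by (metis right_minus_eq)
  note k = key[OF r2 assms(1)[rule_format, of n] assms(2)[rule_format, of n]
     assms(1)[rule_format, of "n+1"] assms(2)[rule_format, of "n+1"] m assms(3)[rule_format, of n],
     of s]
  show ?thesis unfolding q_of_def p_of_def t_of_def of_int_add of_int_1 add_diff_cancel_right' by (rule k)
qed

theorem theorem1p1:
  fixes lam s :: complex and x y :: "int \<Rightarrow> complex"
  assumes "\<forall>n. x n \<noteq> 0" and "\<forall>n. y n \<noteq> 0" and "\<forall>n. y n + lam \<noteq> 0"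
    and "\<forall>n. y n \<noteq> of_int n"
  shows "(\<forall>n. x n * x (n + 1) = (of_int n - y n) / (2 * (y n)^2 + 2 * lam * y n)
              \<and> y n + y (n - 1) = - (2 * lam * (x n)^2 - s * x n - 1) / (2 * (x n)^2))
     \<longleftrightarrow>
         (\<forall>n. q_of (x (n + 1)) (y (n + 1)) + q_of (x n) (y n)
                 = p_of n (x n) (y n) - t_of s - (of_int n + lam) / p_of n (x n) (y n)
              \<and> p_of n (x n) (y n) + p_of (n - 1) (x (n - 1)) (y (n - 1))
                 = q_of (x n) (y n) + t_of s - of_int n / q_of (x n) (y n))"
proof -
  note P = pointwise[OF assms]
  show ?thesis
    by (rule reidx2) (rule P)
qed

end
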